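(* Let $J$ be a Jordan algebra with unit element $1$ over a field $F$ of characteristic $\neq 2,3$, and let $d$ be a derivation with invertible values of $J$. Then every proper ideal $I$ of $J$ satisfies $d(I) = 0$.
   Context: A Jordan algebra is a commutative algebra satisfying $(x^2,y,x)=0$, where $(a,b,c)=(ab)c-a(bc)$. In a Jordan algebra $J$ with unit $1$, an element $x$ is invertible if there exists $y \in J$ with $xy = 1$ and $x^2 y = x$. A derivation with invertible values of $J$ is a nonzero derivation $d$ of $J$ such that for every $x \in J$, $d(x)$ is either invertible or equal to $0$. *)

theory Defs
  imports Complex_Main
begin

text \<open>A (not necessarily finite-dimensional) algebra over a field 'f is modelled as the
  whole type 'a, which is an 'f-vector space via smult, with bilinear product mult.\<close>

definition jassoc :: "('a \<Rightarrow> 'a \<Rightarrow> 'a::ab_group_add) \<Rightarrow> 'a \<Rightarrow> 'a \<Rightarrow> 'a \<Rightarrow> 'a" where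
  "jassoc mult a b c = mult (mult a b) c - mult a (mult b c)"

definition bilinear_product ::
  "('f::field \<Rightarrow> 'a::ab_group_add \<Rightarrow> 'a) \<Rightarrow> ('a \<Rightarrow> 'a \<Rightarrow> 'a) \<Rightarrow> bool" where
  "bilinear_product smult mult \<longleftrightarrow>
     (\<forall>x y z. mult (x + y) z = mult x z + mult y z) \<and>
     (\<forall>x y z. mult x (y + z) = mult x y + mult x z) \<and>
     (\<forall>c x y. mult (smult c x) y = smult c (mult x y)) \<and>
     (\<forall>c x y. mult x (smult c y) = smult c (mult x y))"

definition unital_jordan_algebra ::
  "('f::field \<Rightarrow> 'a::ab_group_add \<Rightarrow> 'a) \<Rightarrow> ('a \<Rightarrow> 'a \<Rightarrow> 'a) \<Rightarrow> 'a \<Rightarrow> bool" where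
  "unital_jordan_algebra smult mult one \<longleftrightarrow>
     Vector_Spaces.vector_space smult \<and> bilinear_product smult mult \<and>
     (\<forall>x y. mult x y = mult y x) \<and>
     (\<forall>x y. jassoc mult (mult x x) y x = 0) \<and>
     (\<forall>x. mult one x = x \<and> mult x one = x)"

definition jinvertible :: "('a \<Rightarrow> 'a \<Rightarrow> 'a) \<Rightarrow> 'a \<Rightarrow> 'a \<Rightarrow> bool" where
  "jinvertible mult one x \<longleftrightarrow> (\<exists>y. mult x y = one \<and> mult (mult x x) y = x)"

definition jderivation ::
  "('f::field \<Rightarrow> 'a::ab_group_add \<Rightarrow> 'a) \<Rightarrow> ('a \<Rightarrow> 'a \<Rightarrow> 'a) \<Rightarrow> ('a \<Rightarrow> 'a) \<Rightarrow> bool" where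
  "jderivation smult mult d \<longleftrightarrow>
     Vector_Spaces.linear smult smult d \<and> (\<forall>x y. d (mult x y) = mult (d x) y + mult x (d y))"

definition derivation_invertible_values ::
  "('f::field \<Rightarrow> 'a::ab_group_add \<Rightarrow> 'a) \<Rightarrow> ('a \<Rightarrow> 'a \<Rightarrow> 'a) \<Rightarrow> 'a \<Rightarrow> ('a \<Rightarrow> 'a) \<Rightarrow> bool" where
  "derivation_invertible_values smult mult one d \<longleftrightarrow>
     jderivation smult mult d \<and> d \<noteq> (\<lambda>x. 0) \<and>
     (\<forall>x. jinvertible mult one (d x) \<or> d x = 0)"

definition jideal ::
  "('f::field \<Rightarrow> 'a::ab_group_add \<Rightarrow> 'a) \<Rightarrow> ('a \<Rightarrow> 'a \<Rightarrow> 'a) \<Rightarrow> 'a set \<Rightarrow> bool" where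
  "jideal smult mult I \<longleftrightarrow>
     module.subspace smult I \<and> (\<forall>x\<in>I. \<forall>y. mult x y \<in> I \<and> mult y x \<in> I)"

end

theory Submission
  imports Defs
begin

theorem lemma2:
  fixes smult :: "'f::field \<Rightarrow> 'a::ab_group_add \<Rightarrow> 'a"
    and mult :: "'a \<Rightarrow> 'a \<Rightarrow> 'a" and one :: 'a
    and d :: "'a \<Rightarrow> 'a" and I :: "'a set"
  assumes "CHAR('f) \<noteq> 2" and "CHAR('f) \<noteq> 3"
    and "unital_jordan_algebra smult mult one"
    and "derivation_invertible_values smult mult one d"
    and "jideal smult mult I" and "I \<noteq> UNIV"
  shows "\<forall>x\<in>I. d x = 0"
proof (rule ccontr)
  assume "\<not> (\<forall>x\<in>I. d x = 0)"
  then obtain z where zI: "z \<in> I" and dz: "d z \<noteq> 0" by auto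
  have vs: "Vector_Spaces.vector_space smult" and bl: "bilinear_product smult mult"
    and comm: "\<And>x y. mult x y = mult y x" and unit: "\<And>x. mult one x = x"
    using assms(3) unfolding unital_jordan_algebra_def by auto
  interpret vector_space smult by (rule vs)
  have ladd: "\<And>x y z. mult (x + y) z = mult x z + mult y z"
    using bl unfolding bilinear_product_def by auto
  have lin: "Vector_Spaces.linear smult smult d" and der: "\<And>x y. d (mult x y) = mult (d x) y + mult x (d y)"
    and inv: "\<And>x. jinvertible mult one (d x) \<or> d x = 0"
    using assms(4) unfolding derivation_invertible_values_def jderivation_def by auto
  interpret Vector_Spaces.linear smult smult d by (rule lin)
  have sub: "subspace I" and idl: "\<And>x y. x \<in> I \<Longrightarrow> mult x y \<in> I"
    using assms(5) unfolding jideal_def by auto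
  have one_not: "one \<notin> I"
  proof
    assume "one \<in> I"
    then have "\<And>y. y \<in> I" using idl unit by metis
    then show False using assms(6) by auto
  qed
  have noinv: "\<And>w. w \<in> I \<Longrightarrow> \<not> jinvertible mult one w"
    using idl one_not unfolding jinvertible_def by metis
  define u where "u = d z"
  obtain v where uv: "mult u v = one" and uuv: "mult (mult u u) v = u"
    using inv[of z] dz unfolding u_def jinvertible_def by auto
  have "d (mult z z) = mult u z + mult z u" using der u_def by simp
  also have "\<dots> \<in> I" using idl[OF zI] comm sub subspace_add by metis
  finally have "d (mult z z) = 0" using inv noinv by metis
  hence zu: "mult z u + mult z u = 0" using der comm u_def by metis
  have "0 = d (mult z u + mult z u)" using zu zero by simp
  also have "\<dots> = d (mult z u) + d (mult z u)" by (rule add)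
  also have "\<dots> = (mult u u + mult z (d u)) + (mult u u + mult z (d u))" using der u_def by simp
  finally have "mult u u + mult u u = - (mult z (d u) + mult z (d u))"
    by (simp add: algebra_simps eq_neg_iff_add_eq_0)
  also have "\<dots> \<in> I" using idl[OF zI] sub subspace_add subspace_neg by metis
  finally have "mult (mult u u + mult u u) v \<in> I" using idl by blast
  hence uu: "u + u \<in> I" using ladd[of "mult u u" "mult u u" v] uuv by simp
  have "mult (u + u) v \<in> I" using idl[OF uu] .
  hence 11: "one + one \<in> I" using ladd[of u u v] uv by simp
  have "(2::'f) \<noteq> 0"
  proof
    assume "(2::'f) = 0"
    hence "CHAR('f) dvd 2" using of_nat_eq_0_iff_char_dvd[of 2, where 'a='f] by simp
    moreover have "CHAR('f) \<noteq> 1"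
    proof
      assume "CHAR('f) = 1"
      hence "of_nat 1 = (0::'f)" using of_nat_eq_0_iff_char_dvd[of 1, where 'a='f] by simp
      thus False by simp
    qed
    moreover have "CHAR('f) \<noteq> 0" using \<open>CHAR('f) dvd 2\<close> by (metis dvd_0_left zero_neq_numeral)
    ultimately have "CHAR('f) \<le> 2" "CHAR('f) \<noteq> 0" "CHAR('f) \<noteq> 1"
      using dvd_imp_le by auto
    thus False using assms(1) by linarith
  qed
  hence h: "(1/2::'f) + 1/2 = 1" by (simp add: field_simps)
  have "smult (1/2) (one + one) = smult (1/2) one + smult (1/2) one"
    by (rule scale_right_distrib)
  also have "\<dots> = smult ((1/2::'f) + 1/2) one" by (rule scale_left_distrib[symmetric])
  also have "\<dots> = one" using h by simp
  finally have "smult (1/2) (one + one) = one" .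
  moreover have "smult (1/2) (one + one) \<in> I" using 11 sub subspace_scale by metis
  ultimately show False using one_not by simp
qed

end
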